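(* Let $n\ge 2$, let $\ket{\Psi}=\frac{1}{\sqrt2}(\ket{0}^{\otimes n}+\ket{1}^{\otimes n})$, and for a real $\theta$ let $R_z(\theta)=\begin{pmatrix}e^{-i\theta/2}&0\\0&e^{i\theta/2}\end{pmatrix}$. For $0\le j\le\lceil\log_2 n\rceil$ consider round $j$: first $R_z(-\pi/2^j)$ is applied to the first qubit of a fresh copy of $\ket{\Psi}$ (producing $\ket{t_j}$); then each of a set $K$ of $k$ players (qubits) applies $R_z(\pi/2^j)$ to his own qubit; then $H^{\otimes n}$ is applied ($H$ the Hadamard gate) and all $n$ qubits are measured in the computational basis, giving $x\in\{0,1\}^n$. Then: (i) if $2\le k\le n$, there exists $j\in\{0,\dots,\lceil\log_2 n\rceil\}$ such that in round $j$ the outcome $x$ has odd Hamming weight with probability $1$ (the state before the Hadamard transforms equals, up to global phase, $\frac{1}{\sqrt2}(\ket{0}^{\otimes n}-\ket{1}^{\otimes n})$); (ii) if $k=1$, then in every round $j$ the outcome $x$ has even Hamming weight with probability $1$ (the state before the Hadamard transforms equals $\ket{\Psi}$ up to global phase).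
   Context: Qubits are indexed by players; an operator applied by a player acts only on that player's tensor factor. The rotations applied in a round act on distinct or identical qubits of the same $n$-qubit state. *)

theory Defs
  imports Complex_Main
begin

text \<open>n-qubit states: qubits are indexed 0..n-1 (qubit 0 is the "first qubit");
  a computational basis vector is given by the set S \<subseteq> {0..<n} of qubits in state 1.
  A state is a function from basis labels to amplitudes.\<close>

type_synonym qstate = "nat set \<Rightarrow> complex"

text \<open>A single-qubit gate is a 2x2 matrix U, written as U out inp (False = 0, True = 1).\<close>
type_synonym gate = "bool \<Rightarrow> bool \<Rightarrow> complex"

definition apply1 :: "nat \<Rightarrow> gate \<Rightarrow> qstate \<Rightarrow> qstate" where
  "apply1 q U \<psi> = (\<lambda>S. \<Sum>b\<in>(UNIV::bool set). U (q \<in> S) b * \<psi> (if b then insert q S else S - {q}))"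

definition Rz :: "real \<Rightarrow> gate" where
  "Rz \<theta> = (\<lambda>out inp. if out = inp then
       (if out then exp (\<i> * complex_of_real (\<theta> / 2)) else exp (- \<i> * complex_of_real (\<theta> / 2)))
     else 0)"

definition Had :: gate where
  "Had = (\<lambda>out inp. (if out \<and> inp then -1 else 1) / complex_of_real (sqrt 2))"

definition GHZ :: "nat \<Rightarrow> qstate" where
  "GHZ n = (\<lambda>S. if S = {} \<or> S = {0..<n} then 1 / complex_of_real (sqrt 2) else 0)"

definition GHZminus :: "nat \<Rightarrow> qstate" where
  "GHZminus n = (\<lambda>S. if S = {} then 1 / complex_of_real (sqrt 2)
                     else if S = {0..<n} then - 1 / complex_of_real (sqrt 2) else 0)"

definition pre_state :: "nat \<Rightarrow> nat list \<Rightarrow> nat \<Rightarrow> qstate" where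
  "pre_state n ks j =
     foldr (\<lambda>q \<psi>. apply1 q (Rz (pi / 2 ^ j)) \<psi>) ks (apply1 0 (Rz (- pi / 2 ^ j)) (GHZ n))"

definition hadamard_all :: "nat \<Rightarrow> qstate \<Rightarrow> qstate" where
  "hadamard_all n \<psi> = foldr (\<lambda>q \<phi>. apply1 q Had \<phi>) [0..<n] \<psi>"

definition final_state :: "nat \<Rightarrow> nat list \<Rightarrow> nat \<Rightarrow> qstate" where
  "final_state n ks j = hadamard_all n (pre_state n ks j)"

definition prob_weight :: "nat \<Rightarrow> (nat \<Rightarrow> bool) \<Rightarrow> qstate \<Rightarrow> real" where
  "prob_weight n P \<phi> = (\<Sum>S\<in>{S. S \<subseteq> {0..<n} \<and> P (card S)}. (cmod (\<phi> S))\<^sup>2)"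

end

theory Submission
  imports Defs
begin

lemma card_odd_subsets:
  assumes "finite U" "U \<noteq> {}"
  shows "card {S. S \<subseteq> U \<and> odd (card S)} = 2 ^ (card U - 1)"
proof -
  have e: "card {S. S \<subseteq> U \<and> even (card S)} = card {S. S \<subseteq> U \<and> odd (card S)}"
    using card_subsupersets_even_odd[of U "{}"] assms by auto
  have "Pow U = {S. S \<subseteq> U \<and> even (card S)} \<union> {S. S \<subseteq> U \<and> odd (card S)}" by auto
  hence "2 ^ card U = card {S. S \<subseteq> U \<and> even (card S)} + card {S. S \<subseteq> U \<and> odd (card S)}"
  proof -
    have "2 ^ card U = card (Pow U)" using assms by (simp add: card_Pow)
    also have "\<dots> = card ({S. S \<subseteq> U \<and> even (card S)} \<union> {S. S \<subseteq> U \<and> odd (card S)})"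
      using \<open>Pow U = _\<close> by simp
    also have "\<dots> = card {S. S \<subseteq> U \<and> even (card S)} + card {S. S \<subseteq> U \<and> odd (card S)}"
      using assms by (intro card_Un_disjoint) auto
    finally show ?thesis .
  qed
  moreover have "card U \<ge> 1" using assms by (simp add: Suc_leI card_gt_0_iff)
  moreover have "(2::nat) ^ card U = 2 * 2 ^ (card U - 1)"
    using \<open>card U \<ge> 1\<close> by (cases "card U") auto
  ultimately show ?thesis using e by simp
qed

lemma card_even_subsets:
  assumes "finite U" "U \<noteq> {}"
  shows "card {S. S \<subseteq> U \<and> even (card S)} = 2 ^ (card U - 1)"
proof -
  have "{} \<subset> U" using assms by auto
  hence "card {S. S \<subseteq> U \<and> even (card S)} = card {S. S \<subseteq> U \<and> odd (card S)}"
    using card_subsupersets_even_odd[of U "{}"] assms by simp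
  thus ?thesis using card_odd_subsets[OF assms] by simp
qed

lemma apply1_Rz: "apply1 q (Rz \<theta>) \<psi> S = Rz \<theta> (q\<in>S) (q\<in>S) * \<psi> S"
  by (cases "q \<in> S") (auto simp: apply1_def UNIV_bool Rz_def insert_absorb)

lemma foldr_Rz: "foldr (\<lambda>q \<psi>. apply1 q (Rz \<theta>) \<psi>) ks \<psi> S = (\<Prod>q\<leftarrow>ks. Rz \<theta> (q\<in>S) (q\<in>S)) * \<psi> S"
  by (induction ks) (auto simp: apply1_Rz)

definition upd :: "gate \<Rightarrow> (bool \<Rightarrow> complex) \<Rightarrow> bool \<Rightarrow> complex" where
  "upd M h = (\<lambda>y. M y True * h True + M y False * h False)"

lemma prod_split:
  assumes "finite U" "q \<in> U"
  shows "(\<Prod>i\<in>U. f i (i\<in>T)) = f q (q\<in>T) * (\<Prod>i\<in>U-{q}. f i (i\<in>T))"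
  using assms by (simp add: prod.remove)

lemma prod_ins: "(\<Prod>i\<in>U-{q}. f i (i\<in>insert q S)) = (\<Prod>i\<in>U-{q}. f i (i\<in>S))"
  by (rule prod.cong) auto
lemma prod_del: "(\<Prod>i\<in>U-{q}. f i (i\<in>S - {q})) = (\<Prod>i\<in>U-{q}. f i (i\<in>S))"
  by (rule prod.cong) auto
lemma prod_upd: "(\<Prod>i\<in>U-{q}. (f(q:=h)) i (i\<in>S)) = (\<Prod>i\<in>U-{q}. f i (i\<in>S))"
  by (rule prod.cong) auto

lemma apply1_prod:
  assumes "finite U" "q \<in> U"
    and H: "\<forall>S\<subseteq>U. \<phi> S = a * (\<Prod>i\<in>U. f i (i\<in>S)) + b * (\<Prod>i\<in>U. g i (i\<in>S))"
  shows "\<forall>S\<subseteq>U. apply1 q M \<phi> S = a * (\<Prod>i\<in>U. (f(q := upd M (f q))) i (i\<in>S))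
           + b * (\<Prod>i\<in>U. (g(q := upd M (g q))) i (i\<in>S))"
proof (intro allI impI)
  fix S assume S: "S \<subseteq> U"
  have s1: "insert q S \<subseteq> U" "S - {q} \<subseteq> U" using S assms by auto
  have "apply1 q M \<phi> S = M (q\<in>S) True * \<phi> (insert q S) + M (q\<in>S) False * \<phi> (S - {q})"
    by (simp add: apply1_def UNIV_bool)
  also have "\<dots> = M (q\<in>S) True * (a * (f q True * (\<Prod>i\<in>U-{q}. f i (i\<in>S))) + b * (g q True * (\<Prod>i\<in>U-{q}. g i (i\<in>S))))
     + M (q\<in>S) False * (a * (f q False * (\<Prod>i\<in>U-{q}. f i (i\<in>S))) + b * (g q False * (\<Prod>i\<in>U-{q}. g i (i\<in>S))))"
  proof -
    have "\<phi> (insert q S) = a * (f q True * (\<Prod>i\<in>U-{q}. f i (i\<in>S))) + b * (g q True * (\<Prod>i\<in>U-{q}. g i (i\<in>S)))"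
      using H s1(1) prod_split[OF assms(1,2), of f "insert q S"] prod_split[OF assms(1,2), of g "insert q S"]
      by (simp only: prod_ins) simp
    moreover have "\<phi> (S - {q}) = a * (f q False * (\<Prod>i\<in>U-{q}. f i (i\<in>S))) + b * (g q False * (\<Prod>i\<in>U-{q}. g i (i\<in>S)))"
      using H s1(2) prod_split[OF assms(1,2), of f "S - {q}"] prod_split[OF assms(1,2), of g "S - {q}"]
      by (simp only: prod_del) simp
    ultimately show ?thesis by simp
  qed
  also have "\<dots> = a * (upd M (f q) (q\<in>S) * (\<Prod>i\<in>U-{q}. f i (i\<in>S)))
       + b * (upd M (g q) (q\<in>S) * (\<Prod>i\<in>U-{q}. g i (i\<in>S)))"
    by (simp add: upd_def algebra_simps)
  also have "\<dots> = a * (\<Prod>i\<in>U. (f(q := upd M (f q))) i (i\<in>S))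
           + b * (\<Prod>i\<in>U. (g(q := upd M (g q))) i (i\<in>S))"
    using prod_split[OF assms(1,2), of "f(q := upd M (f q))"] prod_split[OF assms(1,2), of "g(q := upd M (g q))"]
    by (simp add: prod_upd)
  finally show "apply1 q M \<phi> S = a * (\<Prod>i\<in>U. (f(q := upd M (f q))) i (i\<in>S))
           + b * (\<Prod>i\<in>U. (g(q := upd M (g q))) i (i\<in>S))" .
qed

lemma foldr_prod:
  assumes "finite U" "distinct qs" "set qs \<subseteq> U"
    and H: "\<forall>S\<subseteq>U. \<phi> S = a * (\<Prod>i\<in>U. f i (i\<in>S)) + b * (\<Prod>i\<in>U. g i (i\<in>S))"
  shows "\<forall>S\<subseteq>U. foldr (\<lambda>q \<phi>. apply1 q M \<phi>) qs \<phi> S =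
     a * (\<Prod>i\<in>U. (if i \<in> set qs then upd M (f i) else f i) (i\<in>S))
   + b * (\<Prod>i\<in>U. (if i \<in> set qs then upd M (g i) else g i) (i\<in>S))"
  using assms(2,3)
proof (induction qs)
  case Nil
  then show ?case using H by simp
next
  case (Cons q qs)
  let ?f = "\<lambda>i. if i \<in> set qs then upd M (f i) else f i"
  let ?g = "\<lambda>i. if i \<in> set qs then upd M (g i) else g i"
  have e1: "?f(q := upd M (?f q)) = (\<lambda>i. if i \<in> set (q#qs) then upd M (f i) else f i)"
    using Cons.prems by (auto simp: fun_eq_iff)
  have e2: "?g(q := upd M (?g q)) = (\<lambda>i. if i \<in> set (q#qs) then upd M (g i) else g i)"
    using Cons.prems by (auto simp: fun_eq_iff)
  show ?case
    using apply1_prod[OF assms(1), of q _ a ?f b ?g M] Cons e1 e2 by simp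
qed


lemma prod_list_const: "(\<forall>q\<in>set ks. f q = c) \<Longrightarrow> (\<Prod>q\<leftarrow>ks. f q) = c ^ length ks"
  by (induction ks) auto

lemma pre_formula:
  fixes j n k :: nat
  assumes "set ks \<subseteq> {0..<n}" "length ks = k" "n \<ge> 1"
  defines "z \<equiv> \<i> * complex_of_real (pi / 2 ^ j / 2)"
  shows "pre_state n ks j = (\<lambda>S. if S = {} then exp z * exp (-z) ^ k / complex_of_real (sqrt 2)
          else if S = {0..<n} then exp (-z) * exp z ^ k / complex_of_real (sqrt 2) else 0)"
proof
  fix S
  have p: "pre_state n ks j S = (\<Prod>q\<leftarrow>ks. Rz (pi / 2 ^ j) (q\<in>S) (q\<in>S)) * (Rz (- pi / 2 ^ j) (0\<in>S) (0\<in>S) * GHZ n S)"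
    by (simp add: pre_state_def foldr_Rz apply1_Rz)
  show "pre_state n ks j S = (if S = {} then exp z * exp (-z) ^ k / complex_of_real (sqrt 2)
          else if S = {0..<n} then exp (-z) * exp z ^ k / complex_of_real (sqrt 2) else 0)"
  proof -
  have r1: "Rz (- pi / 2 ^ j) True True = exp (-z)"
    by (simp add: Rz_def z_def)
  have r2: "Rz (- pi / 2 ^ j) False False = exp z"
    by (simp add: Rz_def z_def)
  have r3: "Rz (pi / 2 ^ j) True True = exp z"
    by (simp add: Rz_def z_def)
  have r4: "Rz (pi / 2 ^ j) False False = exp (-z)"
    by (simp add: Rz_def z_def)
  show ?thesis
  proof (cases "S = {}")
    case True
    have "(\<Prod>q\<leftarrow>ks. Rz (pi / 2 ^ j) (q\<in>S) (q\<in>S)) = exp (-z) ^ k"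
      using True prod_list_const[of ks "\<lambda>q. Rz (pi / 2 ^ j) (q\<in>S) (q\<in>S)" "exp (-z)"] assms(2) r4 by simp
    moreover have "GHZ n S = 1 / complex_of_real (sqrt 2)" using True by (simp add: GHZ_def)
    ultimately show ?thesis using p True r2 by simp
  next
    case False
    show ?thesis
    proof (cases "S = {0..<n}")
      case True
      have "(\<Prod>q\<leftarrow>ks. Rz (pi / 2 ^ j) (q\<in>S) (q\<in>S)) = exp z ^ k"
      proof -
        have "\<forall>q\<in>set ks. Rz (pi / 2 ^ j) (q\<in>S) (q\<in>S) = exp z" using True assms(1) r3 by auto
        thus ?thesis using prod_list_const[of ks "\<lambda>q. Rz (pi / 2 ^ j) (q\<in>S) (q\<in>S)" "exp z"] assms(2) by simp
      qed
      moreover have "0 \<in> S" using True assms by auto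
      moreover have "GHZ n S = 1 / complex_of_real (sqrt 2)" using True by (simp add: GHZ_def)
      ultimately show ?thesis using p True False r1 by simp
    next
      case F2: False
      have "GHZ n S = 0" using F2 False by (simp add: GHZ_def)
      then have "pre_state n ks j S = 0" using p by (simp only: mult_zero_right)
      then show ?thesis using False F2 by (simp only: if_False)
    qed
  qed
  qed
qed

lemma prod_neg: "finite U \<Longrightarrow> S \<subseteq> U \<Longrightarrow> (\<Prod>i\<in>U. (if i \<in> S then -1 else 1 :: complex)) = (-1) ^ card S"
proof -
  assume a: "finite U" "S \<subseteq> U"
  hence "U \<inter> S = S" by auto
  thus ?thesis using a by (simp add: prod.If_cases)
qed

lemma prod_F0: "finite U \<Longrightarrow> S \<subseteq> U \<Longrightarrow> (\<Prod>i\<in>U. (if i \<in> S then 0 else 1 :: complex)) = (if S = {} then 1 else 0)"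
proof -
  assume a: "finite U" "S \<subseteq> U"
  hence "U \<inter> S = S" by auto
  thus ?thesis using a by (simp add: prod.If_cases power_0_left finite_subset)
qed

lemma prod_G0: "finite U \<Longrightarrow> S \<subseteq> U \<Longrightarrow> (\<Prod>i\<in>U. (if i \<in> S then 1 else 0 :: complex)) = (if S = U then 1 else 0)"
proof -
  assume a: "finite U" "S \<subseteq> U"
  have "(\<Prod>i\<in>U. (if i \<in> S then 1 else 0 :: complex)) = 0 ^ card (U - S)"
    using a by (simp add: prod.If_cases Diff_eq)
  also have "\<dots> = (if S = U then 1 else 0)" using a by (auto simp: power_0_left)
  finally show ?thesis .
qed

lemma final_gen:
  assumes "n \<ge> 1"
    and H: "\<forall>S\<subseteq>{0..<n}. \<psi> S = a * (if S = {} then 1 else 0) + b * (if S = {0..<n} then 1 else 0)"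
  shows "\<forall>S\<subseteq>{0..<n}. hadamard_all n \<psi> S = (a + b * (-1) ^ card S) * (1 / complex_of_real (sqrt 2)) ^ n"
proof -
  let ?F = "\<lambda>i::nat. \<lambda>b::bool. if b then 0 else 1 :: complex"
  let ?G = "\<lambda>i::nat. \<lambda>b::bool. if b then 1 else 0 :: complex"
  have H': "\<forall>S\<subseteq>{0..<n}. \<psi> S = a * (\<Prod>i\<in>{0..<n}. ?F i (i\<in>S)) + b * (\<Prod>i\<in>{0..<n}. ?G i (i\<in>S))"
  proof (intro allI impI)
    fix S assume S: "S \<subseteq> {0..<n}"
    show "\<psi> S = a * (\<Prod>i\<in>{0..<n}. ?F i (i\<in>S)) + b * (\<Prod>i\<in>{0..<n}. ?G i (i\<in>S))"
      using H S prod_F0[OF _ S] prod_G0[OF _ S] by simp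
  qed
  have hh: "\<forall>S\<subseteq>{0..<n}. hadamard_all n \<psi> S =
     a * (\<Prod>i\<in>{0..<n}. (if i \<in> set [0..<n] then upd Had (?F i) else ?F i) (i\<in>S))
   + b * (\<Prod>i\<in>{0..<n}. (if i \<in> set [0..<n] then upd Had (?G i) else ?G i) (i\<in>S))"
    unfolding hadamard_all_def by (rule foldr_prod[OF _ _ _ H']) auto
  define d where "d = 1 / complex_of_real (sqrt 2)"
  have u1: "upd Had (\<lambda>b. if b then 0 else 1) = (\<lambda>y. d)"
    by (simp add: upd_def Had_def d_def fun_eq_iff)
  have u2: "upd Had (\<lambda>b. if b then 1 else 0) = (\<lambda>y. (if y then -1 else 1) * d)"
    by (simp add: upd_def Had_def d_def fun_eq_iff)
  show ?thesis unfolding d_def[symmetric]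
  proof (intro allI impI)
    fix S assume S: "S \<subseteq> {0..<n}"
    have "hadamard_all n \<psi> S = a * (\<Prod>i\<in>{0..<n}. d) + b * (\<Prod>i\<in>{0..<n}. (if i \<in> S then -1 else 1) * d)"
    proof -
      have "(\<Prod>i\<in>{0..<n}. (if i \<in> set [0..<n] then upd Had (?F i) else ?F i) (i\<in>S)) = (\<Prod>i\<in>{0..<n}. d)"
        by (rule prod.cong) (auto simp: u1)
      moreover have "(\<Prod>i\<in>{0..<n}. (if i \<in> set [0..<n] then upd Had (?G i) else ?G i) (i\<in>S)) = (\<Prod>i\<in>{0..<n}. (if i \<in> S then -1 else 1) * d)"
        by (rule prod.cong) (auto simp: u2)
      ultimately show ?thesis using hh S by simp
    qed
    also have "\<dots> = a * d ^ n + b * ((-1) ^ card S * d ^ n)"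
      by (simp only: prod.distrib prod_neg[OF _ S] prod_constant finite_atLeastLessThan card_atLeastLessThan diff_zero)
    finally show "hadamard_all n \<psi> S = (a + b * (-1) ^ card S) * d ^ n" by (simp add: algebra_simps)
  qed
qed


lemma pre_cis:
  fixes j n k :: nat
  assumes "set ks \<subseteq> {0..<n}" "length ks = k" "n \<ge> 1"
  shows "pre_state n ks j = (\<lambda>S. if S = {} then cis (pi / 2 ^ j / 2) * cis (- (pi / 2 ^ j / 2)) ^ k / complex_of_real (sqrt 2)
          else if S = {0..<n} then cis (- (pi / 2 ^ j / 2)) * cis (pi / 2 ^ j / 2) ^ k / complex_of_real (sqrt 2) else 0)"
proof -
  have e1: "exp (\<i> * complex_of_real (pi / 2 ^ j / 2)) = cis (pi / 2 ^ j / 2)" by (simp add: cis_conv_exp)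
  have e2: "exp (- (\<i> * complex_of_real (pi / 2 ^ j / 2))) = cis (- (pi / 2 ^ j / 2))" by (simp add: cis_conv_exp)
  show ?thesis using pre_formula[OF assms, of j] by (simp only: e1 e2)
qed

lemma exists_odd: "(m::nat) > 0 \<Longrightarrow> \<exists>j r. m = 2 ^ j * r \<and> odd r"
proof (induction m rule: less_induct)
  case (less m)
  show ?case
  proof (cases "odd m")
    case True
    then have "m = 2 ^ 0 * m" "odd m" by simp_all
    then show ?thesis by blast
  next
    case False
    then obtain m' where m': "m = 2 * m'" by (auto elim: evenE)
    with less.prems have "m' < m" "m' > 0" by auto
    with less.IH obtain j r where "m' = 2 ^ j * r" "odd r" by blast
    then have "m = 2 ^ Suc j * r" "odd r" using m' by simp_all
    then show ?thesis by blast
  qed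
qed

lemma prob_one:
  fixes n :: nat and P :: "nat \<Rightarrow> bool" and \<phi> :: qstate and c :: complex
  assumes "n \<ge> 1" and cnt: "card {S. S \<subseteq> {0..<n} \<and> P (card S)} = 2 ^ (n - 1)"
    and cm: "cmod c = 1"
    and v: "\<forall>S. S \<subseteq> {0..<n} \<and> P (card S) \<longrightarrow> \<phi> S = c * (2 / complex_of_real (sqrt 2)) * (1 / complex_of_real (sqrt 2)) ^ n"
  shows "prob_weight n P \<phi> = 1"
proof -
  have m: "(cmod (c * (2 / complex_of_real (sqrt 2)) * (1 / complex_of_real (sqrt 2)) ^ n))\<^sup>2 = 2 * (1/2) ^ n"
  proof -
    have "cmod (c * (2 / complex_of_real (sqrt 2)) * (1 / complex_of_real (sqrt 2)) ^ n) = (2 / sqrt 2) * (1 / sqrt 2) ^ n"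
      using cm by (simp add: norm_mult norm_divide norm_power)
    moreover have "((2::real) / sqrt 2)\<^sup>2 = 2" by (simp add: power_divide)
    moreover have "(((1::real) / sqrt 2) ^ n)\<^sup>2 = (1/2) ^ n"
      by (simp add: power_mult[symmetric] mult.commute[of n 2]) (simp add: power_mult power_divide)
    ultimately show ?thesis by (simp only: power_mult_distrib)
  qed
  have "prob_weight n P \<phi> = (\<Sum>S\<in>{S. S \<subseteq> {0..<n} \<and> P (card S)}. 2 * (1/2) ^ n)"
    unfolding prob_weight_def using v m by (intro sum.cong) auto
  also have "\<dots> = 2 ^ (n - 1) * 2 * (1/2) ^ n" using cnt by simp
  also have "\<dots> = 1"
  proof -
    have "(2::real) ^ (n - 1) * 2 = 2 ^ n" using assms(1) by (cases n) auto
    thus ?thesis by (simp add: power_one_over)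
  qed
  finally show ?thesis .
qed


lemma part_ii:
  fixes n k :: nat and ks :: "nat list"
  assumes "n \<ge> 2" "set ks \<subseteq> {0..<n}" "length ks = 1"
  shows "prob_weight n even (final_state n ks j) = 1 \<and>
               (\<exists>c. cmod c = 1 \<and> pre_state n ks j = (\<lambda>S. c * GHZ n S))"
proof -
  have n1: "n \<ge> 1" using assms by simp
  let ?a = "cis (pi / 2 ^ j / 2)" and ?b = "cis (- (pi / 2 ^ j / 2))"
  have ab: "?a * ?b = 1" by (simp add: cis_mult)
  have ba: "?b * ?a = 1" by (simp add: cis_mult)
  have pre: "pre_state n ks j = GHZ n"
    using pre_cis[OF assms(2,3) n1, of j] ab ba by (simp add: GHZ_def fun_eq_iff)
  have H: "\<forall>S\<subseteq>{0..<n}. pre_state n ks j S = 1 / complex_of_real (sqrt 2) * (if S = {} then 1 else 0)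
        + 1 / complex_of_real (sqrt 2) * (if S = {0..<n} then 1 else 0)"
    using assms(1) by (auto simp: pre GHZ_def)
  have F: "\<forall>S\<subseteq>{0..<n}. final_state n ks j S = (1 / complex_of_real (sqrt 2) + 1 / complex_of_real (sqrt 2) * (-1) ^ card S) * (1 / complex_of_real (sqrt 2)) ^ n"
    unfolding final_state_def using final_gen[OF n1 H] .
  have "prob_weight n even (final_state n ks j) = 1"
  proof (rule prob_one[OF n1 _ _, of _ 1])
    show "card {S. S \<subseteq> {0..<n} \<and> even (card S)} = 2 ^ (n - 1)"
      using card_even_subsets[of "{0..<n}"] n1 by simp
    show "\<forall>S. S \<subseteq> {0..<n} \<and> even (card S) \<longrightarrow> final_state n ks j S = 1 * (2 / complex_of_real (sqrt 2)) * (1 / complex_of_real (sqrt 2)) ^ n"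
      using F by auto
  qed simp
  moreover have "\<exists>c. cmod c = 1 \<and> pre_state n ks j = (\<lambda>S. c * GHZ n S)"
    by (rule exI[of _ 1]) (simp add: pre)
  ultimately show ?thesis by blast
qed


lemma part_i_round:
  fixes n m j r :: nat and ks :: "nat list"
  assumes "n \<ge> 2" "set ks \<subseteq> {0..<n}" "length ks = Suc m" "m = 2 ^ j * r" "odd r"
  shows "prob_weight n odd (final_state n ks j) = 1 \<and>
               (\<exists>c. cmod c = 1 \<and> pre_state n ks j = (\<lambda>S. c * GHZminus n S))"
proof -
  have n1: "n \<ge> 1" using assms by simp
  let ?a = "cis (pi / 2 ^ j / 2)" and ?b = "cis (- (pi / 2 ^ j / 2))"
  define c where "c = ?b ^ m"
  have cm: "cmod c = 1" by (simp add: c_def norm_power)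
  have ab: "?a * ?b = 1" by (simp add: cis_mult)
  have ba: "?b * ?a = 1" by (simp add: cis_mult)
  have am2: "?a ^ (2 * m) = -1"
  proof -
    have "?a ^ (2 * m) = cis (real (2 * m) * (pi / 2 ^ j / 2))" by (rule DeMoivre)
    also have "real (2 * m) * (pi / 2 ^ j / 2) = real r * pi" using assms(4) by simp
    also have "cis (real r * pi) = cis pi ^ r" by (simp only: DeMoivre)
    also have "\<dots> = -1" using assms(5) by simp
    finally show ?thesis .
  qed
  have v1: "?a * ?b ^ Suc m = c" using ab by (simp add: c_def mult.assoc[symmetric])
  have v2: "?b * ?a ^ Suc m = - c"
  proof -
    have "?b * ?a ^ Suc m = ?a ^ m" using ba by (simp add: mult.assoc[symmetric])
    also have "\<dots> = ?b ^ m * ?a ^ (2 * m)"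
    proof -
      have "?b ^ m * ?a ^ (2 * m) = (?b * ?a) ^ m * ?a ^ m"
        by (simp only: power_mult_distrib mult_2 power_add mult.assoc)
      thus ?thesis using ba by simp
    qed
    finally show ?thesis using am2 by (simp add: c_def)
  qed
  have ne: "{0..<n} \<noteq> {}" using n1 by simp
  have pre: "pre_state n ks j = (\<lambda>S. c * GHZminus n S)"
    using pre_cis[OF assms(2,3) n1, of j] v1 v2 ne by (auto simp: GHZminus_def fun_eq_iff)
  have H: "\<forall>S\<subseteq>{0..<n}. pre_state n ks j S = c / complex_of_real (sqrt 2) * (if S = {} then 1 else 0)
        + (- c / complex_of_real (sqrt 2)) * (if S = {0..<n} then 1 else 0)"
    using ne by (auto simp: pre GHZminus_def)
  have F: "\<forall>S\<subseteq>{0..<n}. final_state n ks j S = (c / complex_of_real (sqrt 2) + (- c / complex_of_real (sqrt 2)) * (-1) ^ card S) * (1 / complex_of_real (sqrt 2)) ^ n"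
    unfolding final_state_def using final_gen[OF n1 H] .
  have "prob_weight n odd (final_state n ks j) = 1"
  proof (rule prob_one[OF n1 _ cm])
    show "card {S. S \<subseteq> {0..<n} \<and> odd (card S)} = 2 ^ (n - 1)"
      using card_odd_subsets[of "{0..<n}"] n1 by simp
    show "\<forall>S. S \<subseteq> {0..<n} \<and> odd (card S) \<longrightarrow> final_state n ks j S = c * (2 / complex_of_real (sqrt 2)) * (1 / complex_of_real (sqrt 2)) ^ n"
      using F by (auto simp: algebra_simps add_divide_distrib[symmetric])
  qed
  with pre cm show ?thesis by blast
qed

lemma j_bound:
  fixes n m j r :: nat
  assumes "m < n" "m = 2 ^ j * r" "odd r"
  shows "j \<le> nat \<lceil>log 2 (real n)\<rceil>"
proof -
  have "r \<ge> 1" using assms(3) by (cases r) auto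
  hence "2 ^ j \<le> m" using assms(2) by simp
  hence lt: "(2::real) ^ j < real n" using assms(1) by (metis of_nat_less_iff of_nat_numeral of_nat_power le_less_trans)
  have "real j < log 2 (real n)"
    using lt by (subst less_log_iff) (auto simp: powr_realpow)
  hence "real j \<le> real_of_int \<lceil>log 2 (real n)\<rceil>" by linarith
  thus ?thesis by linarith
qed

theorem mainTheorem7:
  fixes n k :: nat and ks :: "nat list"
  assumes "n \<ge> 2"
    and "distinct ks" and "set ks \<subseteq> {0..<n}" and "length ks = k"
  shows "(2 \<le> k \<and> k \<le> n \<longrightarrow>
            (\<exists>j \<le> nat \<lceil>log 2 (real n)\<rceil>.
               prob_weight n odd (final_state n ks j) = 1 \<and>
               (\<exists>c. cmod c = 1 \<and> pre_state n ks j = (\<lambda>S. c * GHZminus n S))))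
       \<and> (k = 1 \<longrightarrow>
            (\<forall>j \<le> nat \<lceil>log 2 (real n)\<rceil>.
               prob_weight n even (final_state n ks j) = 1 \<and>
               (\<exists>c. cmod c = 1 \<and> pre_state n ks j = (\<lambda>S. c * GHZ n S))))"
proof (rule conjI; intro impI)
  assume k: "2 \<le> k \<and> k \<le> n"
  define m where "m = k - 1"
  have m0: "m > 0" and mn: "m < n" and lk: "length ks = Suc m" using k assms(4) by (auto simp: m_def)
  obtain j r where jr: "m = 2 ^ j * r" "odd r" using exists_odd[OF m0] by blast
  have "j \<le> nat \<lceil>log 2 (real n)\<rceil>" using j_bound[OF mn jr] .
  moreover have "prob_weight n odd (final_state n ks j) = 1 \<and>
               (\<exists>c. cmod c = 1 \<and> pre_state n ks j = (\<lambda>S. c * GHZminus n S))"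
    using part_i_round[OF assms(1,3) lk jr] .
  ultimately show "\<exists>j \<le> nat \<lceil>log 2 (real n)\<rceil>.
               prob_weight n odd (final_state n ks j) = 1 \<and>
               (\<exists>c. cmod c = 1 \<and> pre_state n ks j = (\<lambda>S. c * GHZminus n S))" by blast
next
  assume "k = 1"
  then show "\<forall>j \<le> nat \<lceil>log 2 (real n)\<rceil>.
               prob_weight n even (final_state n ks j) = 1 \<and>
               (\<exists>c. cmod c = 1 \<and> pre_state n ks j = (\<lambda>S. c * GHZ n S))"
    using part_ii[OF assms(1,3)] assms(4) by simp
qed

end
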